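(* Let $M\geq 1$ be an integer and consider the bilateral cooperation model described in the context, with arbitrary real utility vectors. Then every dominant-strategy incentive-compatible (DSIC) mechanism $r$ has competitive ratio $C_r\leq 1/M$.
   Context: Bilateral cooperation model: there are two agents, a buyer and a seller, and options $0,1,\dots,M$. A buyer utility vector is $b=(b_1,\dots,b_M)\in\mathbb{R}^M$ and a seller utility vector is $s=(s_1,\dots,s_M)\in\mathbb{R}^M$ (entries may be positive, zero or negative; these are private information); by convention $b_0=s_0=0$. Define $\mathrm{Feasible}(b,s)=\{i\in\{0,\dots,M\}: b_i\geq 0 \text{ and } s_i\geq 0\}$ and $OPT(b,s)=\max_{i\in \mathrm{Feasible}(b,s)}(b_i+s_i)$. A mechanism is a function $r$ mapping each pair of reported vectors $(b',s')\in\mathbb{R}^M\times\mathbb{R}^M$ to a probability vector $(r_0(b',s'),\dots,r_M(b',s'))$ with nonnegative entries summing to $1$. The mechanism $r$ is DSIC if for all $b,b',s,s'\in\mathbb{R}^M$: $\sum_{i=1}^M r_i(b,s')\,b_i\geq \sum_{i=1}^M r_i(b',s')\,b_i$ and $\sum_{i=1}^M r_i(b',s)\,s_i\geq \sum_{i=1}^M r_i(b',s')\,s_i$ (here $b,s$ are the true vectors). For a DSIC mechanism, its gain at true vectors $(b,s)$ is $G_r(b,s)=\sum_{i=1}^M r_i(b,s)(b_i+s_i)$, and its competitive ratio is $C_r=\min_{b,s} G_r(b,s)/OPT(b,s)$. *)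

theory Defs
  imports Complex_Main "HOL-Library.Extended_Real"
begin

text \<open>Utility vectors in R^M are represented as functions nat => real that vanish
  outside {1..M}; in particular b 0 = 0 (the convention b_0 = s_0 = 0).\<close>
definition vecs :: "nat \<Rightarrow> (nat \<Rightarrow> real) set" where
  "vecs M = {b. \<forall>i. i \<notin> {1..M} \<longrightarrow> b i = 0}"

definition Feasible :: "nat \<Rightarrow> (nat \<Rightarrow> real) \<Rightarrow> (nat \<Rightarrow> real) \<Rightarrow> nat set" where
  "Feasible M b s = {i \<in> {0..M}. b i \<ge> 0 \<and> s i \<ge> 0}"

definition OPT :: "nat \<Rightarrow> (nat \<Rightarrow> real) \<Rightarrow> (nat \<Rightarrow> real) \<Rightarrow> real" where
  "OPT M b s = Max ((\<lambda>i. b i + s i) ` Feasible M b s)"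

definition mechanism :: "nat \<Rightarrow> ((nat \<Rightarrow> real) \<Rightarrow> (nat \<Rightarrow> real) \<Rightarrow> nat \<Rightarrow> real) \<Rightarrow> bool" where
  "mechanism M r \<longleftrightarrow> (\<forall>b \<in> vecs M. \<forall>s \<in> vecs M.
      (\<forall>i \<in> {0..M}. r b s i \<ge> 0) \<and> (\<Sum>i = 0..M. r b s i) = 1)"

definition DSIC :: "nat \<Rightarrow> ((nat \<Rightarrow> real) \<Rightarrow> (nat \<Rightarrow> real) \<Rightarrow> nat \<Rightarrow> real) \<Rightarrow> bool" where
  "DSIC M r \<longleftrightarrow> (\<forall>b \<in> vecs M. \<forall>b' \<in> vecs M. \<forall>s \<in> vecs M. \<forall>s' \<in> vecs M.
      (\<Sum>i = 1..M. r b s' i * b i) \<ge> (\<Sum>i = 1..M. r b' s' i * b i) \<and>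
      (\<Sum>i = 1..M. r b' s i * s i) \<ge> (\<Sum>i = 1..M. r b' s' i * s i))"

definition gain :: "nat \<Rightarrow> ((nat \<Rightarrow> real) \<Rightarrow> (nat \<Rightarrow> real) \<Rightarrow> nat \<Rightarrow> real)
    \<Rightarrow> (nat \<Rightarrow> real) \<Rightarrow> (nat \<Rightarrow> real) \<Rightarrow> real" where
  "gain M r b s = (\<Sum>i = 1..M. r b s i * (b i + s i))"

definition competitive_ratio :: "nat \<Rightarrow> ((nat \<Rightarrow> real) \<Rightarrow> (nat \<Rightarrow> real) \<Rightarrow> nat \<Rightarrow> real) \<Rightarrow> ereal" where
  "competitive_ratio M r =
     (INF p \<in> {(b, s). b \<in> vecs M \<and> s \<in> vecs M \<and> OPT M b s > 0}.
        ereal (gain M r (fst p) (snd p) / OPT M (fst p) (snd p)))"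

end

theory Submission
  imports Defs
begin


definition good :: "nat \<Rightarrow> real \<Rightarrow> nat set \<Rightarrow> (nat \<Rightarrow> real) \<Rightarrow> (nat \<Rightarrow> real) \<Rightarrow> real \<Rightarrow> (nat \<Rightarrow> real) \<Rightarrow> (nat \<Rightarrow> real) \<Rightarrow> bool" where
  "good M K F x y T b s \<longleftrightarrow> b \<in> vecs M \<and> s \<in> vecs M \<and> (\<forall>i\<in>F. b i = x i \<and> s i = y i) \<and>
     (\<forall>j\<in>{1..M}-F. b j \<le> K \<and> s j \<le> K \<and> b j + s j \<le> -T)"

definition claimW :: "nat \<Rightarrow> real \<Rightarrow> real \<Rightarrow> ((nat \<Rightarrow> real) \<Rightarrow> (nat \<Rightarrow> real) \<Rightarrow> nat \<Rightarrow> real) \<Rightarrow> nat set \<Rightarrow> (nat \<Rightarrow> real) \<Rightarrow> (nat \<Rightarrow> real) \<Rightarrow> (nat \<Rightarrow> real) \<Rightarrow> bool" where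
  "claimW M K c r F x y w \<longleftrightarrow> (\<forall>\<epsilon>>0. \<exists>T>0. \<forall>b s. good M K F x y T b s \<longrightarrow> (\<Sum>i\<in>F. w i * r b s i) \<ge> c * (\<Sum>i\<in>F. w i) - \<epsilon>)"

definition adm :: "nat \<Rightarrow> real \<Rightarrow> nat set \<Rightarrow> (nat \<Rightarrow> real) \<Rightarrow> (nat \<Rightarrow> real) \<Rightarrow> bool" where
  "adm M K F x y \<longleftrightarrow> F \<subseteq> {1..M} \<and> F \<noteq> {} \<and>
     (\<forall>i\<in>F. 0 \<le> x i \<and> x i \<le> K \<and> 0 \<le> y i \<and> y i \<le> K \<and> (0 < x i \<or> 0 < y i)) \<and>
     (\<forall>i\<in>F. \<forall>j\<in>F. i \<noteq> j \<longrightarrow> x i * y j \<noteq> x j * y i)"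

definition goodm :: "nat \<Rightarrow> real \<Rightarrow> ((nat \<Rightarrow> real) \<Rightarrow> (nat \<Rightarrow> real) \<Rightarrow> nat \<Rightarrow> real) \<Rightarrow> bool" where
  "goodm M c r \<longleftrightarrow> mechanism M r \<and> DSIC M r \<and>
     (\<forall>b\<in>vecs M. \<forall>s\<in>vecs M. OPT M b s > 0 \<longrightarrow> gain M r b s \<ge> c * OPT M b s)"

lemma good_mono: "good M K F x y T' b s \<Longrightarrow> T \<le> T' \<Longrightarrow> good M K F x y T b s"
  unfolding good_def by force

lemma OPT_ge:
  assumes "b \<in> vecs M" "s \<in> vecs M" "i \<in> {1..M}" "b i \<ge> 0" "s i \<ge> 0"
  shows "OPT M b s \<ge> b i + s i"
proof -
  have fin: "finite (Feasible M b s)" unfolding Feasible_def by auto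
  have "i \<in> Feasible M b s" using assms unfolding Feasible_def by auto
  then show ?thesis unfolding OPT_def using fin by (intro Max_ge) auto
qed

lemma mech_sum_le1:
  assumes "mechanism M r" "b \<in> vecs M" "s \<in> vecs M" "A \<subseteq> {1..M}"
  shows "(\<Sum>i\<in>A. r b s i) \<le> 1" "\<And>i. i \<in> {0..M} \<Longrightarrow> r b s i \<ge> 0"
proof -
  have nn: "\<And>i. i \<in> {0..M} \<Longrightarrow> r b s i \<ge> 0" and s1: "(\<Sum>i = 0..M. r b s i) = 1"
    using assms unfolding mechanism_def by auto
  then show "\<And>i. i \<in> {0..M} \<Longrightarrow> r b s i \<ge> 0" by auto
  have "(\<Sum>i\<in>A. r b s i) \<le> (\<Sum>i = 0..M. r b s i)"
    using assms(4) nn by (intro sum_mono2) auto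
  then show "(\<Sum>i\<in>A. r b s i) \<le> 1" using s1 by simp
qed

lemma mass_bound:
  assumes gm: "goodm M c r" and c0: "c \<ge> 0" and ad: "adm M K F x y"
    and g: "good M K F x y T b s" and T0: "T > 0"
  shows "(\<Sum>j\<in>{1..M}-F. r b s j) \<le> 2 * K / T"
proof -
  have bv: "b \<in> vecs M" and sv: "s \<in> vecs M" and onF: "\<forall>i\<in>F. b i = x i \<and> s i = y i"
    and offF: "\<forall>j\<in>{1..M}-F. b j \<le> K \<and> s j \<le> K \<and> b j + s j \<le> -T"
    using g unfolding good_def by auto
  have FM: "F \<subseteq> {1..M}" and Fne: "F \<noteq> {}"
    and xy: "\<forall>i\<in>F. 0 \<le> x i \<and> x i \<le> K \<and> 0 \<le> y i \<and> y i \<le> K \<and> (0 < x i \<or> 0 < y i)"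
    using ad unfolding adm_def by auto
  have mech: "mechanism M r" and rat: "\<forall>b\<in>vecs M. \<forall>s\<in>vecs M. OPT M b s > 0 \<longrightarrow> gain M r b s \<ge> c * OPT M b s"
    using gm unfolding goodm_def by auto
  have nn: "\<And>i. i \<in> {0..M} \<Longrightarrow> r b s i \<ge> 0" using mech_sum_le1[OF mech bv sv] by auto
  obtain i0 where i0: "i0 \<in> F" using Fne by auto
  have "OPT M b s \<ge> b i0 + s i0"
    using OPT_ge[OF bv sv] i0 FM onF xy by force
  moreover have "b i0 + s i0 > 0" using i0 onF xy by force
  ultimately have "OPT M b s > 0" by linarith
  then have gpos: "gain M r b s \<ge> 0" using rat bv sv c0
    by (meson dual_order.trans less_eq_real_def mult_nonneg_nonneg)
  have split: "gain M r b s = (\<Sum>i\<in>F. r b s i * (b i + s i)) + (\<Sum>i\<in>{1..M}-F. r b s i * (b i + s i))"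
    unfolding gain_def using FM by (metis (no_types, lifting) finite_atLeastAtMost sum.subset_diff add.commute)
  have A: "(\<Sum>i\<in>F. r b s i * (b i + s i)) \<le> (\<Sum>i\<in>F. r b s i * (2*K))"
  proof (rule sum_mono)
    fix i assume "i \<in> F"
    then have "b i + s i \<le> 2*K" "r b s i \<ge> 0" using onF xy FM nn by force+
    then show "r b s i * (b i + s i) \<le> r b s i * (2*K)" by (simp add: mult_left_mono)
  qed
  have A2: "(\<Sum>i\<in>F. r b s i * (2*K)) \<le> 2*K"
  proof -
    have K0: "K \<ge> 0" using i0 xy by force
    have "(\<Sum>i\<in>F. r b s i * (2*K)) = (\<Sum>i\<in>F. r b s i) * (2*K)" by (simp add: sum_distrib_right)
    also have "\<dots> \<le> 1 * (2*K)" using mech_sum_le1(1)[OF mech bv sv FM] K0 by (intro mult_right_mono) auto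
    finally show ?thesis by simp
  qed
  have B: "(\<Sum>i\<in>{1..M}-F. r b s i * (b i + s i)) \<le> (\<Sum>i\<in>{1..M}-F. r b s i * (-T))"
  proof (rule sum_mono)
    fix i assume "i \<in> {1..M}-F"
    then have "b i + s i \<le> -T" "r b s i \<ge> 0" using offF nn by force+
    then show "r b s i * (b i + s i) \<le> r b s i * (-T)" by (metis mult_left_mono)
  qed
  have B2: "(\<Sum>i\<in>{1..M}-F. r b s i * (-T)) = - T * (\<Sum>i\<in>{1..M}-F. r b s i)"
    by (simp add: sum_distrib_left sum_negf mult.commute)
  have "T * (\<Sum>i\<in>{1..M}-F. r b s i) \<le> 2*K" using gpos split A A2 B B2 by linarith
  then show ?thesis using T0 by (simp add: field_simps)
qed


lemma base_y0:
  assumes gm: "goodm M c r" and c0: "c \<ge> 0" and ad: "adm M K F x y" and F: "F = {i}" and y0: "y i = 0"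
  shows "claimW M K c r F x y x"
  unfolding claimW_def
proof (intro allI impI)
  fix \<epsilon> :: real assume e: "\<epsilon> > 0"
  show "\<exists>T>0. \<forall>b s. good M K F x y T b s \<longrightarrow> c * (\<Sum>i\<in>F. x i) - \<epsilon> \<le> (\<Sum>i\<in>F. x i * r b s i)"
  proof (intro exI[of _ 1] conjI allI impI)
    fix b s assume g: "good M K F x y 1 b s"
    have bv: "b \<in> vecs M" and sv: "s \<in> vecs M" and onF: "\<forall>i\<in>F. b i = x i \<and> s i = y i"
      and offF: "\<forall>j\<in>{1..M}-F. b j \<le> K \<and> s j \<le> K \<and> b j + s j \<le> -1"
      using g unfolding good_def by auto
    have FM: "F \<subseteq> {1..M}"
      and xy: "\<forall>i\<in>F. 0 \<le> x i \<and> x i \<le> K \<and> 0 \<le> y i \<and> y i \<le> K \<and> (0 < x i \<or> 0 < y i)"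
      using ad unfolding adm_def by auto
    have iM: "i \<in> {1..M}" using FM F by auto
    have xi: "x i > 0" using xy F y0 by auto
    have mech: "mechanism M r" and rat: "\<forall>b\<in>vecs M. \<forall>s\<in>vecs M. OPT M b s > 0 \<longrightarrow> gain M r b s \<ge> c * OPT M b s"
      using gm unfolding goodm_def by auto
    have nn: "\<And>i. i \<in> {0..M} \<Longrightarrow> r b s i \<ge> 0" using mech_sum_le1[OF mech bv sv] by auto
    have bi: "b i = x i" "s i = y i" using onF F by auto
    have "OPT M b s \<ge> b i + s i" using OPT_ge[OF bv sv iM] bi xi y0 by auto
    then have opt: "OPT M b s \<ge> x i" using bi y0 by simp
    then have "gain M r b s \<ge> c * OPT M b s" using rat bv sv xi by auto
    moreover have "c * OPT M b s \<ge> c * x i" using opt c0 by (simp add: mult_left_mono)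
    ultimately have gx: "gain M r b s \<ge> c * x i" by linarith
    have split: "gain M r b s = (\<Sum>i\<in>F. r b s i * (b i + s i)) + (\<Sum>i\<in>{1..M}-F. r b s i * (b i + s i))"
      unfolding gain_def using FM by (metis (no_types, lifting) finite_atLeastAtMost sum.subset_diff add.commute)
    have neg: "(\<Sum>i\<in>{1..M}-F. r b s i * (b i + s i)) \<le> 0"
    proof (rule sum_nonpos)
      fix j assume "j \<in> {1..M}-F"
      then have "b j + s j \<le> -1" "r b s j \<ge> 0" using offF nn by force+
      then show "r b s j * (b j + s j) \<le> 0" by (simp add: mult_nonneg_nonpos)
    qed
    have "(\<Sum>i\<in>F. r b s i * (b i + s i)) = r b s i * x i" using F bi y0 by simp
    then have "x i * r b s i \<ge> c * x i" using gx split neg by (simp add: mult.commute)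
    then show "c * (\<Sum>i\<in>F. x i) - \<epsilon> \<le> (\<Sum>i\<in>F. x i * r b s i)" using F e by simp
  qed simp
qed

lemma base_zero:
  assumes "\<forall>i\<in>F. x i = 0"
  shows "claimW M K c r F x y x"
  unfolding claimW_def using assms by (auto intro!: exI[of _ 1])

lemma goodm_swap:
  assumes "goodm M c r"
  shows "goodm M c (\<lambda>b s. r s b)"
proof -
  have mech: "mechanism M r" and ds: "DSIC M r" and rat: "\<forall>b\<in>vecs M. \<forall>s\<in>vecs M. OPT M b s > 0 \<longrightarrow> gain M r b s \<ge> c * OPT M b s"
    using assms unfolding goodm_def by auto
  have m2: "mechanism M (\<lambda>b s. r s b)" using mech unfolding mechanism_def by auto
  have H: "\<And>b b' s s'. b\<in>vecs M \<Longrightarrow> b'\<in>vecs M \<Longrightarrow> s\<in>vecs M \<Longrightarrow> s'\<in>vecs M \<Longrightarrow>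
      (\<Sum>i = 1..M. r b s' i * b i) \<ge> (\<Sum>i = 1..M. r b' s' i * b i) \<and>
      (\<Sum>i = 1..M. r b' s i * s i) \<ge> (\<Sum>i = 1..M. r b' s' i * s i)"
    using ds unfolding DSIC_def by blast
  have d2: "DSIC M (\<lambda>b s. r s b)" unfolding DSIC_def
  proof (intro ballI conjI)
    fix b b' s s' assume v: "b\<in>vecs M" "b'\<in>vecs M" "s\<in>vecs M" "s'\<in>vecs M"
    show "(\<Sum>i = 1..M. r s' b i * b i) \<ge> (\<Sum>i = 1..M. r s' b' i * b i)"
      using H[of s' s' b b'] v by blast
    show "(\<Sum>i = 1..M. r s b' i * s i) \<ge> (\<Sum>i = 1..M. r s' b' i * s i)"
      using H[of s s' b' b'] v by blast
  qed
  have feas: "\<And>b s. Feasible M b s = Feasible M s b" unfolding Feasible_def by auto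
  have opt: "\<And>b s. OPT M b s = OPT M s b"
  proof -
    fix b s :: "nat \<Rightarrow> real"
    have "(\<lambda>i. b i + s i) ` Feasible M b s = (\<lambda>i. s i + b i) ` Feasible M s b"
      using feas by (simp add: add.commute)
    then show "OPT M b s = OPT M s b" unfolding OPT_def by simp
  qed
  have gn: "\<And>b s. gain M (\<lambda>b s. r s b) b s = gain M r s b" unfolding gain_def by (simp add: add.commute)
  have r2: "\<forall>b\<in>vecs M. \<forall>s\<in>vecs M. OPT M b s > 0 \<longrightarrow> gain M (\<lambda>b s. r s b) b s \<ge> c * OPT M b s"
  proof (intro ballI impI)
    fix b s assume v: "b \<in> vecs M" "s \<in> vecs M" and p: "OPT M b s > 0"
    then have "OPT M s b > 0" using opt by metis
    then have "gain M r s b \<ge> c * OPT M s b" using rat v by blast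
    then show "gain M (\<lambda>b s. r s b) b s \<ge> c * OPT M b s" using gn opt by metis
  qed
  show ?thesis unfolding goodm_def using m2 d2 r2 by blast
qed

lemma good_swap: "good M K F y x T b s \<longleftrightarrow> good M K F x y T s b"
  unfolding good_def by (auto simp: add.commute)

lemma claimW_swap:
  assumes "claimW M K c (\<lambda>b s. r s b) F y x y"
  shows "claimW M K c r F x y y"
  unfolding claimW_def
proof (intro allI impI)
  fix \<epsilon> :: real assume e: "\<epsilon> > 0"
  obtain T where T: "T > 0" "\<forall>b s. good M K F y x T b s \<longrightarrow> c * (\<Sum>i\<in>F. y i) - \<epsilon> \<le> (\<Sum>i\<in>F. y i * r s b i)"
    using assms e unfolding claimW_def by blast
  show "\<exists>T>0. \<forall>b s. good M K F x y T b s \<longrightarrow> c * (\<Sum>i\<in>F. y i) - \<epsilon> \<le> (\<Sum>i\<in>F. y i * r b s i)"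
  proof (intro exI[of _ T] conjI allI impI)
    fix b s assume "good M K F x y T b s"
    then have "good M K F y x T s b" using good_swap by blast
    then show "c * (\<Sum>i\<in>F. y i) - \<epsilon> \<le> (\<Sum>i\<in>F. y i * r b s i)" using T by blast
  qed (use T in auto)
qed

lemma adm_swap: "adm M K F x y \<Longrightarrow> adm M K F y x"
  unfolding adm_def by (simp add: mult.commute) (metis mult.commute)


lemma sum_split_sub:
  fixes f :: "nat \<Rightarrow> real"
  assumes "A \<subseteq> B" "finite B"
  shows "sum f B = sum f A + sum f (B - A)"
proof -
  have "sum f B = sum f (B - A) + sum f A" by (rule sum.subset_diff[OF assms])
  then show ?thesis by simp
qed

lemma ruleB:
  assumes gm: "goodm M c r" and c0: "c \<ge> 0" and K0: "K > 0"
    and ad: "adm M K F x y" and adF': "adm M K F' x' y"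
    and sub: "F' \<subseteq> F" and mu: "\<mu> \<ge> 0"
    and xx: "\<forall>i\<in>F'. x' i = x i - \<mu> * y i" and z: "\<forall>i\<in>F-F'. x i = 0"
    and C1: "claimW M K c r F' x' y x'" and C2: "claimW M K c r F' x' y y"
  shows "claimW M K c r F x y x"
  unfolding claimW_def
proof (intro allI impI)
  fix \<epsilon> :: real assume e: "\<epsilon> > 0"
  obtain T1 where T1: "T1 > 0" "\<forall>b s. good M K F' x' y T1 b s \<longrightarrow> c * (\<Sum>i\<in>F'. x' i) - \<epsilon>/4 \<le> (\<Sum>i\<in>F'. x' i * r b s i)"
  proof -
    have e4: "\<epsilon>/4 > 0" using e by simp
    then show ?thesis using C1 that unfolding claimW_def by blast
  qed
  have e2: "\<epsilon> / (4 * (\<mu> + 1)) > 0" using e mu by simp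
  obtain T2 where T2: "T2 > 0" "\<forall>b s. good M K F' x' y T2 b s \<longrightarrow> c * (\<Sum>i\<in>F'. y i) - \<epsilon> / (4 * (\<mu> + 1)) \<le> (\<Sum>i\<in>F'. y i * r b s i)"
    using C2 e2 unfolding claimW_def by blast
  define T where "T = 8*K*K/\<epsilon> + 1"
  have T0: "T > 0" unfolding T_def using K0 e by (simp add: add_pos_nonneg)
  show "\<exists>T>0. \<forall>b s. good M K F x y T b s \<longrightarrow> c * (\<Sum>i\<in>F. x i) - \<epsilon> \<le> (\<Sum>i\<in>F. x i * r b s i)"
  proof (intro exI[of _ T] conjI allI impI)
    show "T > 0" by (rule T0)
    fix b s assume g: "good M K F x y T b s"
    have bv: "b \<in> vecs M" and sv: "s \<in> vecs M" and onF: "\<forall>i\<in>F. b i = x i \<and> s i = y i"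
      and offF: "\<forall>j\<in>{1..M}-F. b j \<le> K \<and> s j \<le> K \<and> b j + s j \<le> -T"
      using g unfolding good_def by auto
    have FM: "F \<subseteq> {1..M}"
      and xy: "\<forall>i\<in>F. 0 \<le> x i \<and> x i \<le> K \<and> 0 \<le> y i \<and> y i \<le> K \<and> (0 < x i \<or> 0 < y i)"
      using ad unfolding adm_def by auto
    have F'M: "F' \<subseteq> {1..M}" using sub FM by auto
    have mech: "mechanism M r" and ds: "DSIC M r" using gm unfolding goodm_def by auto
    define B where "B = (\<Sum>j\<in>{1..M}-F. \<bar>b j\<bar>)"
    have B0: "B \<ge> 0" unfolding B_def by (simp add: sum_nonneg)
    define L where "L = K + T1 + T2 + 8*K*B/\<epsilon> + 1"
    have LK: "L - K \<ge> T1" "L - K \<ge> T2" "L - K \<ge> 8*K*B/\<epsilon> + 1" "L > 0"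
      unfolding L_def using T1 T2 K0 e B0 by (auto simp: add_pos_nonneg)
    define b' where "b' = (\<lambda>i. if i \<in> F' then x' i else if i \<in> {1..M} then -L else 0)"
    have b'v: "b' \<in> vecs M" unfolding vecs_def b'_def using F'M by auto
    have g': "good M K F' x' y (L - K) b' s"
      unfolding good_def
    proof (intro conjI ballI)
      show "b' \<in> vecs M" "s \<in> vecs M" using b'v sv by auto
      fix i assume "i \<in> F'"
      then show "b' i = x' i" "s i = y i" unfolding b'_def using onF sub by auto
    next
      fix j assume j: "j \<in> {1..M} - F'"
      then have b'j: "b' j = -L" unfolding b'_def by auto
      have sj: "s j \<le> K"
      proof (cases "j \<in> F")
        case True then show ?thesis using onF xy by auto
      next
        case False then show ?thesis using offF j by auto
      qed
      show "b' j \<le> K" using b'j LK K0 by auto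
      show "s j \<le> K" by (rule sj)
      show "b' j + s j \<le> - (L - K)" using b'j sj by auto
    qed
    have h1: "c * (\<Sum>i\<in>F'. x' i) - \<epsilon>/4 \<le> (\<Sum>i\<in>F'. x' i * r b' s i)"
      using T1(2) good_mono[OF g' LK(1)] by blast
    have h2: "c * (\<Sum>i\<in>F'. y i) - \<epsilon> / (4 * (\<mu> + 1)) \<le> (\<Sum>i\<in>F'. y i * r b' s i)"
      using T2(2) good_mono[OF g' LK(2)] by blast
    have LK0: "L - K > 0" using LK(1) T1(1) by linarith
    have mP: "(\<Sum>j\<in>{1..M}-F. r b s j) \<le> 2 * K / T" by (rule mass_bound[OF gm c0 ad g T0])
    have mP': "(\<Sum>j\<in>{1..M}-F'. r b' s j) \<le> 2 * K / (L - K)" by (rule mass_bound[OF gm c0 adF' g' LK0])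
    have nn: "\<And>i. i \<in> {0..M} \<Longrightarrow> r b s i \<ge> 0" using mech_sum_le1[OF mech bv sv] by auto
    have nn': "\<And>i. i \<in> {0..M} \<Longrightarrow> r b' s i \<ge> 0" using mech_sum_le1[OF mech b'v sv] by auto
    have dsic: "(\<Sum>i = 1..M. r b s i * b i) \<ge> (\<Sum>i = 1..M. r b' s i * b i)"
      using ds bv b'v sv unfolding DSIC_def by blast
    have s1: "(\<Sum>i = 1..M. r b s i * b i) = (\<Sum>i\<in>F. r b s i * b i) + (\<Sum>i\<in>{1..M}-F. r b s i * b i)"
      using sum_split_sub[OF FM] by simp
    have s1a: "(\<Sum>i\<in>F. r b s i * b i) = (\<Sum>i\<in>F. x i * r b s i)"
      using onF by (auto intro!: sum.cong)
    have s1b: "(\<Sum>i\<in>{1..M}-F. r b s i * b i) \<le> (\<Sum>i\<in>{1..M}-F. r b s i * K)"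
    proof (rule sum_mono)
      fix i assume i: "i \<in> {1..M}-F"
      then have "b i \<le> K" "r b s i \<ge> 0" using offF nn by force+
      then show "r b s i * b i \<le> r b s i * K" by (simp add: mult_left_mono)
    qed
    have s1c: "(\<Sum>i\<in>{1..M}-F. r b s i * K) = K * (\<Sum>i\<in>{1..M}-F. r b s i)"
      by (simp add: sum_distrib_left mult.commute)
    have err1: "K * (\<Sum>i\<in>{1..M}-F. r b s i) \<le> \<epsilon>/4"
    proof -
      have "K * (\<Sum>i\<in>{1..M}-F. r b s i) \<le> K * (2*K/T)" by (rule mult_left_mono[OF mP]) (use K0 in simp)
      also have "\<dots> = 2*K*K/T" by simp
      also have "\<dots> \<le> \<epsilon>/4"
      proof -
        have "2*K*K \<le> \<epsilon>/4 * T" unfolding T_def using e by (simp add: field_simps)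
        then show ?thesis using T0 by (simp add: divide_le_eq)
      qed
      finally show ?thesis .
    qed
    have s2: "(\<Sum>i = 1..M. r b' s i * b i) = (\<Sum>i\<in>F. r b' s i * b i) + (\<Sum>i\<in>{1..M}-F. r b' s i * b i)"
      using sum_split_sub[OF FM] by simp
    have s2a: "(\<Sum>i\<in>F. r b' s i * b i) = (\<Sum>i\<in>F'. r b' s i * x i) + (\<Sum>i\<in>F-F'. r b' s i * x i)"
    proof -
      have "(\<Sum>i\<in>F. r b' s i * b i) = (\<Sum>i\<in>F. r b' s i * x i)" using onF by (auto intro!: sum.cong)
      also have "\<dots> = (\<Sum>i\<in>F'. r b' s i * x i) + (\<Sum>i\<in>F-F'. r b' s i * x i)"
        using sum_split_sub[OF sub] FM finite_subset by (metis finite_atLeastAtMost)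
      finally show ?thesis .
    qed
    have s2b: "(\<Sum>i\<in>F-F'. r b' s i * x i) = 0" using z by simp
    define m' where "m' = (\<Sum>j\<in>{1..M}-F'. r b' s j)"
    have s2c: "(\<Sum>i\<in>{1..M}-F. r b' s i * b i) \<ge> - (B * m')"
    proof -
      have "(\<Sum>i\<in>{1..M}-F. r b' s i * b i) \<ge> (\<Sum>i\<in>{1..M}-F. - (\<bar>b i\<bar> * m'))"
      proof (rule sum_mono)
        fix i assume i: "i \<in> {1..M}-F"
        have ri: "r b' s i \<ge> 0" using nn' i by force
        have "r b' s i \<le> m'" unfolding m'_def
        proof -
          have "i \<in> {1..M}-F'" using i sub by auto
          then show "r b' s i \<le> (\<Sum>j\<in>{1..M}-F'. r b' s j)"
            using nn' by (intro member_le_sum) auto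
        qed
        then have "\<bar>b i\<bar> * r b' s i \<le> \<bar>b i\<bar> * m'" by (simp add: mult_left_mono)
        moreover have "r b' s i * b i \<ge> - (\<bar>b i\<bar> * r b' s i)"
        proof -
          have "- \<bar>b i\<bar> \<le> b i" by simp
          then have "r b' s i * (- \<bar>b i\<bar>) \<le> r b' s i * b i" using ri by (rule mult_left_mono)
          then show ?thesis by (simp add: mult.commute)
        qed
        ultimately show "- (\<bar>b i\<bar> * m') \<le> r b' s i * b i" by linarith
      qed
      also have "(\<Sum>i\<in>{1..M}-F. - (\<bar>b i\<bar> * m')) = - (B * m')"
        unfolding B_def by (simp add: sum_negf sum_distrib_right)
      finally show ?thesis by linarith
    qed
    have err2: "B * m' \<le> \<epsilon>/4"
    proof -
      have m'b: "m' \<le> 2*K/(L-K)" using mP' unfolding m'_def .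
      have m'0: "m' \<ge> 0" unfolding m'_def using nn' by (intro sum_nonneg) auto
      have "B * m' \<le> B * (2*K/(L-K))" by (rule mult_left_mono[OF m'b B0])
      also have "\<dots> \<le> \<epsilon>/4"
      proof -
        have "B * (2*K) \<le> \<epsilon>/4 * (L-K)"
        proof -
          have "\<epsilon>/4 * (L-K) \<ge> \<epsilon>/4 * (8*K*B/\<epsilon>)" using LK(3) e by (intro mult_left_mono) auto
          also have "\<epsilon>/4 * (8*K*B/\<epsilon>) = 2*K*B" using e by (simp add: field_simps)
          finally show ?thesis by (simp add: mult.commute mult.left_commute)
        qed
        then show ?thesis using LK0 by (simp add: divide_le_eq mult.commute)
      qed
      finally show ?thesis .
    qed
    have s3: "(\<Sum>i\<in>F'. r b' s i * x i) = (\<Sum>i\<in>F'. x' i * r b' s i) + \<mu> * (\<Sum>i\<in>F'. y i * r b' s i)"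
    proof -
      have "(\<Sum>i\<in>F'. r b' s i * x i) = (\<Sum>i\<in>F'. x' i * r b' s i + \<mu> * (y i * r b' s i))"
      proof (rule sum.cong)
        fix i assume "i \<in> F'"
        then have "x i = x' i + \<mu> * y i" using xx by simp
        then show "r b' s i * x i = x' i * r b' s i + \<mu> * (y i * r b' s i)" by (simp add: algebra_simps)
      qed simp
      then show ?thesis by (simp add: sum.distrib sum_distrib_left)
    qed
    have s4: "(\<Sum>i\<in>F'. x' i) = (\<Sum>i\<in>F. x i) - \<mu> * (\<Sum>i\<in>F'. y i)"
    proof -
      have "(\<Sum>i\<in>F'. x' i) = (\<Sum>i\<in>F'. x i - \<mu> * y i)" using xx by (auto intro!: sum.cong)
      also have "\<dots> = (\<Sum>i\<in>F'. x i) - \<mu> * (\<Sum>i\<in>F'. y i)" by (simp add: sum_subtractf sum_distrib_left)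
      also have "(\<Sum>i\<in>F'. x i) = (\<Sum>i\<in>F. x i)"
      proof -
        have "(\<Sum>i\<in>F. x i) = (\<Sum>i\<in>F'. x i) + (\<Sum>i\<in>F-F'. x i)"
          using sum_split_sub[OF sub] FM finite_subset by (metis finite_atLeastAtMost)
        then show ?thesis using z by simp
      qed
      finally show ?thesis .
    qed
    have err3: "\<mu> * (\<epsilon> / (4 * (\<mu> + 1))) \<le> \<epsilon>/4"
    proof -
      have "\<mu> * (\<epsilon> / (4 * (\<mu> + 1))) = (\<epsilon>/4) * (\<mu> / (\<mu> + 1))" by (simp add: field_simps)
      also have "\<dots> \<le> (\<epsilon>/4) * 1" using mu e by (intro mult_left_mono) auto
      finally show ?thesis by simp
    qed
    have h2': "\<mu> * (\<Sum>i\<in>F'. y i * r b' s i) \<ge> \<mu> * (c * (\<Sum>i\<in>F'. y i)) - \<mu> * (\<epsilon> / (4 * (\<mu> + 1)))"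
    proof -
      have "\<mu> * (c * (\<Sum>i\<in>F'. y i) - \<epsilon> / (4 * (\<mu> + 1))) \<le> \<mu> * (\<Sum>i\<in>F'. y i * r b' s i)"
        by (rule mult_left_mono[OF h2 mu])
      then show ?thesis by (simp add: right_diff_distrib)
    qed
    have cdist: "c * (\<Sum>i\<in>F'. x' i) = c * (\<Sum>i\<in>F. x i) - \<mu> * (c * (\<Sum>i\<in>F'. y i))"
      using s4 by (simp add: right_diff_distrib mult.left_commute)
    show "c * (\<Sum>i\<in>F. x i) - \<epsilon> \<le> (\<Sum>i\<in>F. x i * r b s i)"
      using dsic s1 s1a s1b s1c err1 s2 s2a s2b s2c err2 s3 h1 h2' cdist err3 by linarith
  qed
qed


lemma main_ind:
  assumes c0: "c \<ge> 0" and K0: "K > 0"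
  shows "\<forall>r F x y. card F + card {i\<in>F. 0 < x i \<and> 0 < y i} = n \<longrightarrow> goodm M c r \<longrightarrow> adm M K F x y \<longrightarrow>
           claimW M K c r F x y x \<and> claimW M K c r F x y y"
proof (induction n rule: less_induct)
  case (less n)
  have A: "claimW M K c r F x y x"
    if meas: "card F + card {i\<in>F. 0 < x i \<and> 0 < y i} = n" and gm: "goodm M c r" and ad: "adm M K F x y"
    for r F x y
  proof -
    have FM: "F \<subseteq> {1..M}" and Fne: "F \<noteq> {}"
      and xy: "\<forall>i\<in>F. 0 \<le> x i \<and> x i \<le> K \<and> 0 \<le> y i \<and> y i \<le> K \<and> (0 < x i \<or> 0 < y i)"
      and np: "\<forall>i\<in>F. \<forall>j\<in>F. i \<noteq> j \<longrightarrow> x i * y j \<noteq> x j * y i"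
      using ad unfolding adm_def by auto
    have finF: "finite F" using FM finite_subset by blast
    show ?thesis
    proof (cases "\<exists>j\<in>F. x j = 0")
      case True
      then obtain j where j: "j \<in> F" "x j = 0" by blast
      show ?thesis
      proof (cases "F = {j}")
        case True
        then show ?thesis using j by (intro base_zero) auto
      next
        case False
        define F' where "F' = F - {j}"
        have F'ne: "F' \<noteq> {}" unfolding F'_def using False j by blast
        have sub: "F' \<subseteq> F" unfolding F'_def by auto
        have ad': "adm M K F' x y" using ad sub F'ne unfolding adm_def by blast
        have c1: "card F' < card F" unfolding F'_def using finF j(1) by (rule card_Diff1_less)
        have c2: "card {i\<in>F'. 0 < x i \<and> 0 < y i} \<le> card {i\<in>F. 0 < x i \<and> 0 < y i}"
          using finF sub by (intro card_mono) auto
        have lt: "card F' + card {i\<in>F'. 0 < x i \<and> 0 < y i} < n" using meas c1 c2 by linarith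
        have IH: "claimW M K c r F' x y x \<and> claimW M K c r F' x y y"
          using less.IH[OF lt] gm ad' by blast
        show ?thesis
        proof (rule ruleB[OF gm c0 K0 ad ad' sub])
          show "(0::real) \<le> 0" by simp
          show "\<forall>i\<in>F'. x i = x i - 0 * y i" by simp
          show "\<forall>i\<in>F - F'. x i = 0" unfolding F'_def using j by auto
          show "claimW M K c r F' x y x" "claimW M K c r F' x y y" using IH by auto
        qed
      qed
    next
      case False
      then have xpos: "\<forall>j\<in>F. x j > 0" using xy by force
      show ?thesis
      proof (cases "\<forall>j\<in>F. y j = 0")
        case True
        obtain i where i: "i \<in> F" using Fne by blast
        have "F = {i}"
        proof (rule ccontr)
          assume "F \<noteq> {i}"
          then obtain j where "j \<in> F" "j \<noteq> i" using i by blast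
          then show False using np i True by force
        qed
        then show ?thesis using base_y0[OF gm c0 ad] True i by auto
      next
        case False
        define G where "G = {j\<in>F. y j > 0}"
        have Gne: "G \<noteq> {}" unfolding G_def using False xy by force
        have finG: "finite G" unfolding G_def using finF by auto
        define \<mu> where "\<mu> = Min ((\<lambda>j. x j / y j) ` G)"
        obtain j0 where j0: "j0 \<in> G" "\<mu> = x j0 / y j0"
        proof -
          have "\<mu> \<in> (\<lambda>j. x j / y j) ` G" unfolding \<mu>_def using finG Gne by (intro Min_in) auto
          then show ?thesis using that by blast
        qed
        have j0F: "j0 \<in> F" "y j0 > 0" using j0 unfolding G_def by auto
        have mu0: "\<mu> \<ge> 0" using j0 j0F xy by auto
        have mule: "\<mu> \<le> x j / y j" if "j \<in> G" for j
          unfolding \<mu>_def using finG that by (intro Min_le) auto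
        define x' where "x' = (\<lambda>i. x i - \<mu> * y i)"
        have x'ge: "0 \<le> x' i" if "i \<in> F" for i
        proof (cases "y i > 0")
          case True
          then have "i \<in> G" unfolding G_def using that by auto
          then have "\<mu> \<le> x i / y i" by (rule mule)
          then have "\<mu> * y i \<le> x i" using True by (simp add: le_divide_eq)
          then show ?thesis unfolding x'_def by simp
        next
          case False
          then have "y i = 0" using xy that by force
          then show ?thesis unfolding x'_def using xy that by simp
        qed
        have x'le: "x' i \<le> x i" if "i \<in> F" for i
          unfolding x'_def using mu0 xy that by (simp add: mult_nonneg_nonneg)
        have ad': "adm M K F x' y"
          unfolding adm_def
        proof (intro conjI ballI impI)
          show "F \<subseteq> {1..M}" "F \<noteq> {}" using FM Fne by auto
        next
          fix i assume i: "i \<in> F"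
          show "0 \<le> x' i" using x'ge i .
          show "x' i \<le> K" using x'le[OF i] xy i by force
          show "0 \<le> y i" "y i \<le> K" using xy i by auto
          show "0 < x' i \<or> 0 < y i"
          proof (cases "y i > 0")
            case False
            then have "y i = 0" using xy i by force
            then show ?thesis unfolding x'_def using xpos i by simp
          qed simp
        next
          fix i j assume i: "i \<in> F" and j: "j \<in> F" and ij: "i \<noteq> j"
          have "x' i * y j - x' j * y i = x i * y j - x j * y i" unfolding x'_def by (simp add: algebra_simps)
          then show "x' i * y j \<noteq> x' j * y i" using np i j ij by auto
        qed
        have x'j0: "x' j0 = 0" unfolding x'_def using j0 j0F by simp
        have psub: "{i\<in>F. 0 < x' i \<and> 0 < y i} \<subset> {i\<in>F. 0 < x i \<and> 0 < y i}"
        proof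
          show "{i\<in>F. 0 < x' i \<and> 0 < y i} \<subseteq> {i\<in>F. 0 < x i \<and> 0 < y i}"
            using x'le by force
          have "j0 \<in> {i\<in>F. 0 < x i \<and> 0 < y i}" using j0F xpos by auto
          moreover have "j0 \<notin> {i\<in>F. 0 < x' i \<and> 0 < y i}" using x'j0 by auto
          ultimately show "{i\<in>F. 0 < x' i \<and> 0 < y i} \<noteq> {i\<in>F. 0 < x i \<and> 0 < y i}" by blast
        qed
        have "card {i\<in>F. 0 < x' i \<and> 0 < y i} < card {i\<in>F. 0 < x i \<and> 0 < y i}"
          using psub finF by (intro psubset_card_mono) auto
        then have lt: "card F + card {i\<in>F. 0 < x' i \<and> 0 < y i} < n" using meas by linarith
        have IH: "claimW M K c r F x' y x' \<and> claimW M K c r F x' y y"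
          using less.IH[OF lt] gm ad' by blast
        show ?thesis
        proof (rule ruleB[OF gm c0 K0 ad ad' _ mu0])
          show "F \<subseteq> F" by simp
          show "\<forall>i\<in>F. x' i = x i - \<mu> * y i" unfolding x'_def by simp
          show "\<forall>i\<in>F - F. x i = 0" by simp
          show "claimW M K c r F x' y x'" "claimW M K c r F x' y y" using IH by auto
        qed
      qed
    qed
  qed
  show ?case
  proof (intro allI impI conjI)
    fix r F x y
    assume meas: "card F + card {i\<in>F. 0 < x i \<and> 0 < y i} = n" and gm: "goodm M c r" and ad: "adm M K F x y"
    show "claimW M K c r F x y x" using A[OF meas gm ad] .
    have meas': "card F + card {i\<in>F. 0 < y i \<and> 0 < x i} = n" using meas by (simp add: conj_commute)
    have "claimW M K c (\<lambda>b s. r s b) F y x y" using A[OF meas' goodm_swap[OF gm] adm_swap[OF ad]] .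
    then show "claimW M K c r F x y y" by (rule claimW_swap)
  qed
qed


lemma bound_c:
  assumes M1: "M \<ge> 1" and gm: "goodm M c r" and c0: "c \<ge> 0"
  shows "c \<le> 1 / real M"
proof (rule ccontr)
  assume "\<not> c \<le> 1 / real M"
  then have "1 / real M < c" by simp
  moreover have Mpos: "real M > 0" using M1 by simp
  ultimately have cM: "c * real M > 1" using pos_divide_less_eq[OF Mpos] by simp
  define K where "K = real M"
  have K0: "K > 0" unfolding K_def using M1 by simp
  define x where "x = (\<lambda>i::nat. real M + 1 - real i)"
  define y where "y = (\<lambda>i::nat. real i)"
  define F where "F = {1..M}"
  have ad: "adm M K F x y"
    unfolding adm_def
  proof (intro conjI ballI impI)
    show "F \<subseteq> {1..M}" "F \<noteq> {}" unfolding F_def using M1 by auto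
  next
    fix i assume "i \<in> F"
    then have i: "1 \<le> i" "i \<le> M" unfolding F_def by auto
    then have ri: "1 \<le> real i" "real i \<le> real M" by auto
    show "0 \<le> x i" "x i \<le> K" "0 \<le> y i" "y i \<le> K" "0 < x i \<or> 0 < y i"
      unfolding x_def y_def K_def using ri by auto
  next
    fix i j assume "i \<in> F" "j \<in> F" "i \<noteq> j"
    then have ne: "real j - real i \<noteq> 0" by simp
    have "x i * y j - x j * y i = (real M + 1) * (real j - real i)"
      unfolding x_def y_def by (simp add: algebra_simps)
    moreover have "(real M + 1) * (real j - real i) \<noteq> 0" using ne by simp
    ultimately show "x i * y j \<noteq> x j * y i" by auto
  qed
  have claims: "claimW M K c r F x y x \<and> claimW M K c r F x y y"
    using main_ind[OF c0 K0] gm ad by blast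
  define b where "b = (\<lambda>i. if i \<in> {1..M} then x i else 0)"
  define s where "s = (\<lambda>i. if i \<in> {1..M} then y i else 0)"
  have g: "good M K F x y T b s" for T
    unfolding good_def b_def s_def vecs_def F_def by auto
  define \<epsilon> where "\<epsilon> = (c * real M * (real M + 1) - (real M + 1)) / 4"
  have e: "\<epsilon> > 0" unfolding \<epsilon>_def using cM
  proof -
    have "c * real M * (real M + 1) > 1 * (real M + 1)" using cM by (intro mult_strict_right_mono) auto
    then show "(c * real M * (real M + 1) - (real M + 1)) / 4 > 0" by simp
  qed
  obtain T1 where "T1 > 0" "\<forall>b s. good M K F x y T1 b s \<longrightarrow> c * (\<Sum>i\<in>F. x i) - \<epsilon> \<le> (\<Sum>i\<in>F. x i * r b s i)"
    using claims e unfolding claimW_def by blast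
  then have h1: "c * (\<Sum>i\<in>F. x i) - \<epsilon> \<le> (\<Sum>i\<in>F. x i * r b s i)" using g by blast
  obtain T2 where "T2 > 0" "\<forall>b s. good M K F x y T2 b s \<longrightarrow> c * (\<Sum>i\<in>F. y i) - \<epsilon> \<le> (\<Sum>i\<in>F. y i * r b s i)"
    using claims e unfolding claimW_def by blast
  then have h2: "c * (\<Sum>i\<in>F. y i) - \<epsilon> \<le> (\<Sum>i\<in>F. y i * r b s i)" using g by blast
  have bv: "b \<in> vecs M" "s \<in> vecs M" using g[of 0] unfolding good_def by auto
  have mech: "mechanism M r" using gm unfolding goodm_def by auto
  have le1: "(\<Sum>i\<in>F. r b s i) \<le> 1" using mech_sum_le1(1)[OF mech bv] unfolding F_def by auto
  have sxy: "(\<Sum>i\<in>F. x i * r b s i) + (\<Sum>i\<in>F. y i * r b s i) = (real M + 1) * (\<Sum>i\<in>F. r b s i)"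
  proof -
    have "(\<Sum>i\<in>F. x i * r b s i) + (\<Sum>i\<in>F. y i * r b s i) = (\<Sum>i\<in>F. (x i + y i) * r b s i)"
      by (simp add: sum.distrib algebra_simps)
    also have "\<dots> = (\<Sum>i\<in>F. (real M + 1) * r b s i)" unfolding x_def y_def by simp
    finally show ?thesis by (simp add: sum_distrib_left)
  qed
  have sxy2: "(\<Sum>i\<in>F. x i) + (\<Sum>i\<in>F. y i) = real M * (real M + 1)"
  proof -
    have "(\<Sum>i\<in>F. x i) + (\<Sum>i\<in>F. y i) = (\<Sum>i\<in>F. x i + y i)" by (simp add: sum.distrib)
    also have "\<dots> = (\<Sum>i\<in>F. real M + 1)" unfolding x_def y_def by simp
    also have "\<dots> = real M * (real M + 1)" unfolding F_def by simp
    finally show ?thesis .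
  qed
  have "(real M + 1) * (\<Sum>i\<in>F. r b s i) \<le> real M + 1" using mult_left_mono[OF le1, of "real M + 1"] by simp
  moreover have "c * (\<Sum>i\<in>F. x i) + c * (\<Sum>i\<in>F. y i) = c * (real M * (real M + 1))"
    using sxy2 by (metis distrib_left)
  ultimately have "c * (real M * (real M + 1)) - 2 * \<epsilon> \<le> real M + 1"
    using h1 h2 sxy by linarith
  moreover have "4 * \<epsilon> = c * (real M * (real M + 1)) - (real M + 1)" unfolding \<epsilon>_def by simp
  ultimately show False using e by linarith
qed

theorem theorem1:
  fixes M :: nat
    and r :: "(nat \<Rightarrow> real) \<Rightarrow> (nat \<Rightarrow> real) \<Rightarrow> nat \<Rightarrow> real"
  assumes "M \<ge> 1"
    and "mechanism M r"
    and "DSIC M r"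
  shows "competitive_ratio M r \<le> ereal (1 / real M)"
proof (rule ccontr)
  assume "\<not> competitive_ratio M r \<le> ereal (1 / real M)"
  then have lt: "ereal (1 / real M) < competitive_ratio M r" by simp
  obtain c where c1: "ereal (1 / real M) < ereal c" and c2: "ereal c < competitive_ratio M r"
    using ereal_dense2[OF lt] by blast
  have cgt: "c > 1 / real M" using c1 by simp
  have c0: "c \<ge> 0" using cgt assms(1) by (smt (verit) divide_nonneg_nonneg of_nat_0_le_iff)
  have rat: "\<forall>b\<in>vecs M. \<forall>s\<in>vecs M. OPT M b s > 0 \<longrightarrow> gain M r b s \<ge> c * OPT M b s"
  proof (intro ballI impI)
    fix b s assume v: "b \<in> vecs M" "s \<in> vecs M" and p: "OPT M b s > 0"
    have "(b, s) \<in> {(b, s). b \<in> vecs M \<and> s \<in> vecs M \<and> OPT M b s > 0}" using v p by auto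
    then have "competitive_ratio M r \<le> ereal (gain M r b s / OPT M b s)"
      unfolding competitive_ratio_def by (rule INF_lower2) simp
    then have "ereal c < ereal (gain M r b s / OPT M b s)" using c2 by (meson less_le_trans)
    then have "c < gain M r b s / OPT M b s" by simp
    then show "gain M r b s \<ge> c * OPT M b s" using p by (simp add: pos_less_divide_eq less_imp_le)
  qed
  have "goodm M c r" unfolding goodm_def using assms rat by blast
  then have "c \<le> 1 / real M" using bound_c[OF assms(1) _ c0] by blast
  then show False using cgt by simp
qed


end
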